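(* Let $n\le -1$ be an odd integer with $3\mid n$. Then $$q_n-(1-w)\,q'_n\equiv -w\pmod 3,$$ where $q'_n=dq_n/dw$ and the congruence is coefficientwise in $\mathbb{Z}[w]$.
   Context: Define $q_n\in\mathbb{Z}[w]$ for odd $n\le -1$ by $q_{-1}=w^3-w^2+2w-7$, $q_{-3}=w^5-2w^4-2w^3+5w^2+3w-9$, $q_{-5}=w^7-2w^6-4w^5+8w^4+4w^3-7w^2+2w-7$, and $q_n=(w^2-1)(q_{n+2}-q_{n+4})+q_{n+6}$ for odd $n<-5$. *)

theory Defs
  imports "HOL-Computational_Algebra.Polynomial" "HOL-Number_Theory.Cong"
begin

text \<open>Q k is q_n for n = -(2k+1).\<close>
fun Q :: "nat \<Rightarrow> int poly" where
  "Q 0 = [:-7, 2, -1, 1:]"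
| "Q (Suc 0) = [:-9, 3, 5, -2, -2, 1:]"
| "Q (Suc (Suc 0)) = [:-7, 2, -7, 4, 8, -4, -2, 1:]"
| "Q (Suc (Suc (Suc k))) =
     [:-1, 0, 1:] * (Q (Suc (Suc k)) - Q (Suc k)) + Q k"

definition qpoly :: "int \<Rightarrow> int poly" where
  "qpoly n = Q (nat ((- n - 1) div 2))"

end

theory Submission
  imports Defs
begin

lemma rec9:
  fixes f :: "nat \<Rightarrow> 'a::comm_ring_1"
  assumes r: "\<And>k. f (k+3) = a*(f(k+2) - f(k+1)) + f k"
  shows "f(k+9) = a^3*(f(k+6) - f(k+3)) + f k + 3*(
     ((-2)*a^2 + a^3 + 2*a^4 - a^5) * f k
   + ((-1)*a + a^2 + 3*a^3 - 2*a^4 - 2*a^5 + a^6) * f (k+1)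
   + (a + a^2 - 4*a^3 + 3*a^5 - a^6) * f (k+2))"
proof -
  have e3: "f(k+3) = a*(f(k+2) - f(k+1)) + f k" using r[of k] by simp
  have e4: "f(k+4) = a*(f(k+3) - f(k+2)) + f (k+1)" using r[of "k+1"] by (simp add: eval_nat_numeral)
  have e5: "f(k+5) = a*(f(k+4) - f(k+3)) + f (k+2)" using r[of "k+2"] by (simp add: eval_nat_numeral)
  have e6: "f(k+6) = a*(f(k+5) - f(k+4)) + f (k+3)" using r[of "k+3"] by (simp add: eval_nat_numeral)
  have e7: "f(k+7) = a*(f(k+6) - f(k+5)) + f (k+4)" using r[of "k+4"] by (simp add: eval_nat_numeral)
  have e8: "f(k+8) = a*(f(k+7) - f(k+6)) + f (k+5)" using r[of "k+5"] by (simp add: eval_nat_numeral)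
  have e9: "f(k+9) = a*(f(k+8) - f(k+7)) + f (k+6)" using r[of "k+6"] by (simp add: eval_nat_numeral)
  show ?thesis unfolding e9 e8 e7 e6 e5 e4 e3 by (simp add: algebra_simps power_def)
qed

lemma dvd3_coeff: "(3::int poly) dvd p \<longleftrightarrow> (\<forall>i. (3::int) dvd coeff p i)"
proof
  assume "3 dvd p" then obtain r where "p = 3 * r" by auto
  thus "\<forall>i. (3::int) dvd coeff p i" by (simp add: numeral_mult_conv_smult)
next
  assume h: "\<forall>i. (3::int) dvd coeff p i"
  have "p = 3 * map_poly (\<lambda>x. x div 3) p"
    by (rule poly_eqI) (simp add: numeral_mult_conv_smult coeff_map_poly h)
  thus "3 dvd p" by (metis dvd_triv_left)
qed

lemma dvd3_pCons[simp]: "(3::int poly) dvd pCons c p \<longleftrightarrow> 3 dvd c \<and> 3 dvd p"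
  unfolding dvd3_coeff
  by (auto simp: coeff_pCons split: nat.splits)

definition Lop :: "int poly \<Rightarrow> int poly" where
  "Lop p = p - [:1, -1:] * pderiv p"

lemma base1: "(3::int poly) dvd Lop (Q 1) + [:0,1:]"
  by (simp add: Lop_def pderiv_pCons)

lemma base4: "(3::int poly) dvd Lop (Q 4) + [:0,1:]"
  by (simp add: Lop_def pderiv_pCons eval_nat_numeral)

lemma base7: "(3::int poly) dvd Lop (Q 7) + [:0,1:]"
  by (simp add: Lop_def pderiv_pCons eval_nat_numeral)

lemma Lop_add: "Lop (p + q) = Lop p + Lop q"
  by (simp add: Lop_def pderiv_add algebra_simps)

lemma Lop_3: "Lop (3 * r) = 3 * Lop r"
  by (simp add: Lop_def pderiv_mult algebra_simps)

lemma Lop_mult: "Lop (h * g) = h * Lop g - [:1,-1:] * pderiv h * g"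
  by (simp add: Lop_def pderiv_mult algebra_simps)

lemma Q_rec: "Q (k+3) = [:-1,0,1:] * (Q (k+2) - Q (k+1)) + Q k"
  by (simp add: eval_nat_numeral)

lemma step:
  assumes h0: "(3::int poly) dvd Lop (Q m) + [:0,1:]"
    and h3: "(3::int poly) dvd Lop (Q (m+3)) + [:0,1:]"
    and h6: "(3::int poly) dvd Lop (Q (m+6)) + [:0,1:]"
  shows "(3::int poly) dvd Lop (Q (m+9)) + [:0,1:]"
proof -
  define a :: "int poly" where "a = [:-1,0,1:]"
  obtain R where R: "Q (m+9) = a^3 * (Q (m+6) - Q (m+3)) + Q m + 3 * R"
    using rec9[of Q a m, OF Q_rec[unfolded a_def[symmetric]]] by blast
  have pd: "(3::int poly) dvd pderiv (a^3)"
    by (simp add: a_def eval_nat_numeral pderiv_pCons)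
  have d: "(3::int poly) dvd Lop (Q (m+6)) - Lop (Q (m+3))"
    using dvd_diff[OF h6 h3] by simp
  have "Lop (Q (m+9)) + [:0,1:] = a^3 * (Lop (Q (m+6)) - Lop (Q (m+3)))
      - [:1,-1:] * pderiv (a^3) * (Q (m+6) - Q (m+3)) + (Lop (Q m) + [:0,1:]) + 3 * Lop R"
    unfolding R Lop_add Lop_3 Lop_mult by (simp add: Lop_def pderiv_diff algebra_simps)
  also have "(3::int poly) dvd \<dots>"
  proof -
    have t1: "(3::int poly) dvd a^3 * (Lop (Q (m+6)) - Lop (Q (m+3)))" using d by (rule dvd_mult)
    have t2: "(3::int poly) dvd [:1,-1:] * pderiv (a^3) * (Q (m+6) - Q (m+3))"
      using pd by (intro dvd_mult2 dvd_mult)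
    show ?thesis by (rule dvd_add[OF dvd_add[OF dvd_diff[OF t1 t2] h0] dvd_triv_left])
  qed
  finally show ?thesis .
qed

lemma mainP: "(3::int poly) dvd Lop (Q (3*j+1)) + [:0,1:]"
proof (induction j rule: less_induct)
  case (less j)
  show ?case
  proof (cases "j < 3")
    case True
    then have "j = 0 \<or> j = 1 \<or> j = 2" by auto
    then show ?thesis using base1 base4 base7 by auto
  next
    case False
    then obtain i where j: "j = i + 3" by (metis add.commute le_Suc_ex not_less)
    have "(3::int poly) dvd Lop (Q ((3*i+1)+9)) + [:0,1:]"
      apply (rule step)
      using less.IH[of i] less.IH[of "i+1"] less.IH[of "i+2"] j
      by (auto simp: algebra_simps)
    thus ?thesis using j by (simp add: algebra_simps)
  qed
qed

theorem lemma5p3: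
  fixes n :: int
  assumes "n \<le> -1" and "odd n" and "3 dvd n"
  shows "\<forall>i. [coeff (qpoly n - [:1, -1:] * pderiv (qpoly n)) i = coeff (- [:0, 1:]) i] (mod 3)"
proof
  fix i
  obtain t where t: "n = 2*t+1" using assms(2) by (rule oddE)
  have e: "(- n - 1) div 2 = -t-1" using t by simp
  have u: "-t-1 = 3*((-t-1) div 3)+1 \<and> (-t-1) div 3 \<ge> 0" using assms(1,3) t by presburger
  obtain x where x: "-t-1 = 3*x+1" "x \<ge> 0" using u by blast
  have "nat (-t-1) = 3*nat x+1" unfolding x(1) using x(2) by (simp add: nat_add_distrib nat_mult_distrib)
  hence "\<exists>j. nat (-t-1) = 3*j+1" by blast
  then obtain j where j: "nat ((- n - 1) div 2) = 3*j+1" using e by auto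
  have "(3::int poly) dvd Lop (qpoly n) + [:0,1:]"
    using mainP[of j] j by (simp add: qpoly_def)
  then have "3 dvd coeff (Lop (qpoly n) + [:0,1:]) i" unfolding dvd3_coeff by blast
  then show "[coeff (qpoly n - [:1, -1:] * pderiv (qpoly n)) i = coeff (- [:0, 1:]) i] (mod 3)"
  proof -
    have "coeff (Lop (qpoly n) + [:0,1:]) i = coeff (Lop (qpoly n)) i - coeff (- [:0, 1:]) i"
      by (simp only: coeff_add coeff_minus diff_minus_eq_add)
    thus ?thesis using \<open>3 dvd coeff (Lop (qpoly n) + [:0,1:]) i\<close>
      unfolding Lop_def cong_iff_dvd_diff by simp
  qed
qed

end
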